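(* Let $P$, $T_\Sigma$, the lattice points $b_1,\dots,b_{p+3}$ and the coefficients $a_i(q)$ be as in the context. Let $b_{i_1},b_{i_2},b_{i_3}$ be the vertices of a triangle $\sigma$ of $T_\Sigma$, listed in counterclockwise order, and let $b_{i_4}$ be a lattice point of $P$ which is not a vertex of $\sigma$. Write $b_{i_4}=b_{i_3}+m'(b_{i_1}-b_{i_3})+n'(b_{i_2}-b_{i_3})$ with $m',n'\in\mathbb{Z}$. Then $$\frac{a_{i_4}(q)\,a_{i_3}(q)^{m'+n'-1}}{a_{i_1}(q)^{m'}\,a_{i_2}(q)^{n'}}$$ is a non-constant monomial of $q$.
   Context: Let $P\subset\mathbb{R}^2$ be a convex lattice polygon with a unimodular triangulation $T_\Sigma$ (every triangle of $T_\Sigma$ has lattice vertices and area $1/2$, and the vertex set of $T_\Sigma$ is $P\cap\mathbb{Z}^2$); this encodes a smooth toric Calabi–Yau 3-fold whose fan has rays generated by $(m,n,1)$, $(m,n)\in P\cap\mathbb{Z}^2$, and 3-cones over the triangles of $T_\Sigma$. Write $P\cap\mathbb{Z}^2=\{b_1,\dots,b_{p+3}\}$, $b_i=(m_i,n_i)$, with $b_1=(1,0)$, $b_2=(0,1)$, $b_3=(0,0)$, where $\sigma_1=\{b_1,b_2,b_3\}$ is a triangle of $T_\Sigma$. Let $L=\ker(\mathbb{Z}^{p+3}\to\mathbb{Z}^3,\ e_i\mapsto(m_i,n_i,1))$ and let $D_i\in L^\vee$ be the restriction of the $i$-th coordinate functional. For a triangle $\sigma$ of $T_\Sigma$ let $I'_\sigma$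 be the set of indices of its vertices; then $\{D_j:j\notin I'_\sigma\}$ is a basis of $L^\vee\otimes\mathbb{Q}$. Fix $H_1,\dots,H_p\in L^\vee\otimes\mathbb{Q}$ (nef classes) such that for every triangle $\sigma$, $H_k=\sum_{j\notin I'_\sigma}s^\sigma_{k,j}D_j$ with all $s^\sigma_{k,j}\in\mathbb{Z}_{\ge0}$ and the matrix $(s^\sigma_{k,j})$ nondegenerate. For $q\in(\mathbb{C}^* )^p$ put $a_i(q)=1$ for $i=1,2,3$ and $a_i(q)=\prod_{k=1}^p q_k^{s^{\sigma_1}_{k,i}}$ for $i\ge4$; the mirror curve is $\{H=0\}\subset(\mathbb{C}^* )^2$ with $H(X,Y,q)=\sum_{i=1}^{p+3}a_i(q)X^{m_i}Y^{n_i}$. A non-constant monomial of $q$ means $\prod_k q_k^{e_k}$ with $e_k\in\mathbb{Z}_{\ge0}$ not all zero. *)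

theory Defs
  imports "HOL-Analysis.Analysis"
begin

text \<open>Lattice points are indexed by 1..N with N = p+3; b i = (m_i, n_i).\<close>

definition rpt :: "int \<times> int \<Rightarrow> real \<times> real" where
  "rpt x = (real_of_int (fst x), real_of_int (snd x))"

definition det2 :: "int \<times> int \<Rightarrow> int \<times> int \<Rightarrow> int" where
  "det2 u v = fst u * snd v - snd u * fst v"

definition vsub :: "int \<times> int \<Rightarrow> int \<times> int \<Rightarrow> int \<times> int" where
  "vsub u v = (fst u - fst v, snd u - snd v)"

definition convex_lattice_polygon :: "(real \<times> real) set \<Rightarrow> bool" where
  "convex_lattice_polygon P \<longleftrightarrow>
     (\<exists>S :: (int \<times> int) set. finite S \<and> P = convex hull (rpt ` S)) \<and> interior P \<noteq> {}"

definition tri :: "(nat \<Rightarrow> int \<times> int) \<Rightarrow> nat set \<Rightarrow> (real \<times> real) set" where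
  "tri b \<sigma> = convex hull (rpt ` b ` \<sigma>)"

definition unimodular_triangulation ::
  "(real \<times> real) set \<Rightarrow> nat \<Rightarrow> (nat \<Rightarrow> int \<times> int) \<Rightarrow> nat set set \<Rightarrow> bool" where
  "unimodular_triangulation P N b T \<longleftrightarrow>
     finite T \<and>
     (\<forall>\<sigma>\<in>T. \<sigma> \<subseteq> {1..N} \<and> card \<sigma> = 3 \<and>
        (\<forall>i\<in>\<sigma>. \<forall>j\<in>\<sigma>. \<forall>k\<in>\<sigma>. i \<noteq> j \<and> j \<noteq> k \<and> i \<noteq> k \<longrightarrow>
            \<bar>det2 (vsub (b j) (b i)) (vsub (b k) (b i))\<bar> = 1)) \<and>
     \<Union>T = {1..N} \<and>
     (\<Union>\<sigma>\<in>T. tri b \<sigma>) = P \<and>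
     (\<forall>\<sigma>\<in>T. \<forall>\<tau>\<in>T. tri b \<sigma> \<inter> tri b \<tau> = tri b (\<sigma> \<inter> \<tau>))"

text \<open>The lattice L = ker(Z^N -> Z^3, e_i |-> (m_i, n_i, 1)), vectors supported on 1..N.\<close>
definition latL :: "nat \<Rightarrow> (nat \<Rightarrow> int \<times> int) \<Rightarrow> (nat \<Rightarrow> int) set" where
  "latL N b = {l. (\<forall>i. i \<notin> {1..N} \<longrightarrow> l i = 0) \<and>
       (\<Sum>i\<in>{1..N}. l i * fst (b i)) = 0 \<and>
       (\<Sum>i\<in>{1..N}. l i * snd (b i)) = 0 \<and>
       (\<Sum>i\<in>{1..N}. l i) = 0}"

text \<open>Element of L^dual (x) Q given by coefficients c: sum_i c_i D_i, as functional on L.\<close>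
definition Dcomb :: "nat \<Rightarrow> (nat \<Rightarrow> rat) \<Rightarrow> (nat \<Rightarrow> int) \<Rightarrow> rat" where
  "Dcomb N c l = (\<Sum>i\<in>{1..N}. c i * of_int (l i))"

text \<open>Admissible data: H k (k = 1..p) given by coefficient vectors (H_k = sum_i H k i D_i);
  for every triangle sigma, H_k = sum_{j not in sigma} s sigma k j D_j with s in Z_{>=0}
  (natural numbers) and the p x p matrix (s sigma k j)_{k in 1..p, j notin sigma} nondegenerate.\<close>
definition nef_data ::
  "nat \<Rightarrow> (nat \<Rightarrow> int \<times> int) \<Rightarrow> nat set set \<Rightarrow> (nat \<Rightarrow> nat \<Rightarrow> rat)
     \<Rightarrow> (nat set \<Rightarrow> nat \<Rightarrow> nat \<Rightarrow> nat) \<Rightarrow> bool" where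
  "nef_data p b T H s \<longleftrightarrow>
     (\<forall>\<sigma>\<in>T. \<forall>k\<in>{1..p}. \<forall>l\<in>latL (p+3) b.
        Dcomb (p+3) (H k) l =
        Dcomb (p+3) (\<lambda>j. if j \<in> \<sigma> then 0 else of_nat (s \<sigma> k j)) l) \<and>
     (\<forall>\<sigma>\<in>T. \<forall>c :: nat \<Rightarrow> rat.
        (\<forall>j\<in>{1..p+3} - \<sigma>. (\<Sum>k\<in>{1..p}. c k * of_nat (s \<sigma> k j)) = 0)
          \<longrightarrow> (\<forall>k\<in>{1..p}. c k = 0))"

text \<open>Mirror curve coefficients a_i(q), sigma_1 = {1,2,3}.\<close>
definition acoef :: "nat \<Rightarrow> (nat set \<Rightarrow> nat \<Rightarrow> nat \<Rightarrow> nat) \<Rightarrow> nat \<Rightarrow> (nat \<Rightarrow> complex) \<Rightarrow> complex" where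
  "acoef p s i q = (if i \<in> {1,2,3} then 1 else (\<Prod>k\<in>{1..p}. q k ^ s {1,2,3} k i))"

end

theory Submission imports Defs "Jordan_Normal_Form.Determinant" begin

lemma col_nonzero:
  fixes S :: "nat \<Rightarrow> nat \<Rightarrow> nat" and X :: "nat set"
  assumes fin: "finite X" and cX: "card X = p" and i4: "i4 \<in> X"
  and indep: "\<forall>c::nat\<Rightarrow>rat. (\<forall>j\<in>X. (\<Sum>k\<in>{1..p}. c k * of_nat (S k j)) = 0) \<longrightarrow> (\<forall>k\<in>{1..p}. c k = 0)"
  shows "\<exists>k\<in>{1..p}. S k i4 \<noteq> 0"
proof (rule ccontr)
  assume "\<not> ?thesis" hence z: "\<forall>k\<in>{1..p}. S k i4 = 0" by auto
  define xs where "xs = sorted_list_of_set X"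
  have len: "length xs = p" and st: "set xs = X" using fin cX by (auto simp: xs_def)
  obtain j0 where j0: "j0 < p" "xs ! j0 = i4" using i4 st len by (metis in_set_conv_nth)
  define A :: "rat mat" where "A = mat p p (\<lambda>(j,k). of_nat (S (k+1) (xs ! j)))"
  have A: "A \<in> carrier_mat p p" by (simp add: A_def)
  have "det A = 0" unfolding det_def
  proof (simp add: carrier_matD[OF A], rule sum.neutral, rule ballI)
    fix \<pi> assume "\<pi> \<in> {\<pi>. \<pi> permutes {0..<p}}"
    hence "\<pi> j0 < p" using j0 by (auto dest: permutes_in_image)
    hence "A $$ (j0, \<pi> j0) = 0" using j0 z by (simp add: A_def)
    hence "(\<Prod>i = 0..<p. A $$ (i, \<pi> i)) = 0" using j0 by (intro prod_zero) auto
    thus "of_int (sign \<pi>) * (\<Prod>i = 0..<p. A $$ (i, \<pi> i)) = 0" by simp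
  qed
  then obtain v where v: "v \<in> carrier_vec p" "v \<noteq> 0\<^sub>v p" "A *\<^sub>v v = 0\<^sub>v p"
    using det_0_iff_vec_prod_zero[OF A] by auto
  define c where "c k = v $ (k - 1)" for k
  have "\<forall>j\<in>X. (\<Sum>k\<in>{1..p}. c k * of_nat (S k j)) = 0"
  proof
    fix j assume "j \<in> X"
    then obtain i where i: "i < p" "xs ! i = j" using st len by (metis in_set_conv_nth)
    have "(A *\<^sub>v v) $ i = (\<Sum>k<p. of_nat (S (k+1) j) * v $ k)"
      using v(1) i by (auto simp: A_def mult_mat_vec_def scalar_prod_def atLeast0LessThan intro!: sum.cong)
    moreover have "(A *\<^sub>v v) $ i = 0" using v(3) i by simp
    ultimately have "0 = (\<Sum>k<p. of_nat (S (k+1) j) * v $ k)" by simp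
    also have "\<dots> = (\<Sum>k\<in>{1..p}. c k * of_nat (S k j))"
    proof -
      have "(\<Sum>k\<in>{1..p}. c k * of_nat (S k j)) = (\<Sum>k<p. c (Suc k) * of_nat (S (Suc k) j))"
        using sum.atLeast1_atMost_eq[of "\<lambda>k. c k * of_nat (S k j)" p] by simp
      thus ?thesis by (simp add: c_def mult.commute)
    qed
    finally show "(\<Sum>k\<in>{1..p}. c k * of_nat (S k j)) = 0" by simp
  qed
  hence "\<forall>k\<in>{1..p}. c k = 0" using indep by blast
  hence c0: "\<forall>k\<in>{1..p}. c k = 0" .
  have "v = 0\<^sub>v p"
  proof (rule eq_vecI)
    show "dim_vec v = dim_vec (0\<^sub>v p)" using v(1) by simp
    fix i assume "i < dim_vec (0\<^sub>v p)"
    hence "i < p" by simp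
    hence "c (Suc i) = 0" using c0 by simp
    thus "v $ i = 0\<^sub>v p $ i" using \<open>i < p\<close> by (simp add: c_def)
  qed
  with v show False by simp
qed

lemma prod_powi:
  fixes f :: "nat \<Rightarrow> complex"
  shows "finite K \<Longrightarrow> (\<Prod>k\<in>K. f k) powi n = (\<Prod>k\<in>K. f k powi n)"
  by (induction K rule: finite_induct) (auto simp: power_int_mult_distrib)

lemma cx1:
  fixes z :: complex and a1 a2 a3 a4 e :: nat and x y w :: int
  assumes z: "z \<noteq> 0" and eq: "int a4 + x * int a3 - y * int a1 - w * int a2 = int e"
  shows "z ^ a4 * (z ^ a3) powi x / ((z ^ a1) powi y * (z ^ a2) powi w) = z ^ e"
proof -
  have "z ^ e = z powi (int a4 + x * int a3 - y * int a1 - w * int a2)"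
    using eq by (metis power_int_of_nat)
  also have "\<dots> = z powi int a4 * z powi (int a3 * x) / (z powi (int a1 * y) * z powi (int a2 * w))"
    using z by (simp add: power_int_add power_int_diff mult.commute)
  also have "\<dots> = z ^ a4 * (z ^ a3) powi x / ((z ^ a1) powi y * (z ^ a2) powi w)"
    by (simp add: power_int_mult)
  finally show ?thesis by simp
qed

lemma sum4:
  fixes c :: "nat \<Rightarrow> 'a::comm_ring_1" and x y w :: int
  assumes "finite A" "i1 \<in> A" "i2 \<in> A" "i3 \<in> A" "i4 \<in> A"
  shows "(\<Sum>i\<in>A. c i * of_int ((if i = i4 then 1 else 0) + (if i = i3 then x else 0)
            - (if i = i1 then y else 0) - (if i = i2 then w else 0)))
       = c i4 + of_int x * c i3 - of_int y * c i1 - of_int w * c i2"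
proof -
  have "(\<Sum>i\<in>A. c i * of_int ((if i = i4 then 1 else 0) + (if i = i3 then x else 0)
            - (if i = i1 then y else 0) - (if i = i2 then w else 0)))
      = (\<Sum>i\<in>A. (if i = i4 then c i else 0) + (if i = i3 then of_int x * c i else 0)
            - (if i = i1 then of_int y * c i else 0) - (if i = i2 then of_int w * c i else 0))"
    by (intro sum.cong) (auto simp: algebra_simps)
  also have "\<dots> = c i4 + of_int x * c i3 - of_int y * c i1 - of_int w * c i2"
    using assms by (simp add: sum.distrib sum_subtractf)
  finally show ?thesis .
qed

theorem proposition2p5p4:
  fixes p :: nat and b :: "nat \<Rightarrow> int \<times> int" and P :: "(real \<times> real) set"
    and T :: "nat set set" and H :: "nat \<Rightarrow> nat \<Rightarrow> rat"
    and s :: "nat set \<Rightarrow> nat \<Rightarrow> nat \<Rightarrow> nat"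
    and i1 i2 i3 i4 :: nat and m' n' :: int
  assumes P: "convex_lattice_polygon P"
    and b_inj: "inj_on b {1..p+3}"
    and b_lattice: "{x :: int \<times> int. rpt x \<in> P} = b ` {1..p+3}"
    and b1: "b 1 = (1, 0)" and b2: "b 2 = (0, 1)" and b3: "b 3 = (0, 0)"
    and T: "unimodular_triangulation P (p+3) b T"
    and sigma1: "{1, 2, 3} \<in> T"
    and nef: "nef_data p b T H s"
    and sigma: "{i1, i2, i3} \<in> T" and distinct: "i1 \<noteq> i2" "i2 \<noteq> i3" "i1 \<noteq> i3"
    and ccw: "det2 (vsub (b i2) (b i1)) (vsub (b i3) (b i1)) > 0"
    and i4: "i4 \<in> {1..p+3}" "i4 \<notin> {i1, i2, i3}"
    and mn: "b i4 = (fst (b i3) + m' * (fst (b i1) - fst (b i3)) + n' * (fst (b i2) - fst (b i3)),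
                     snd (b i3) + m' * (snd (b i1) - snd (b i3)) + n' * (snd (b i2) - snd (b i3)))"
  shows "\<exists>e :: nat \<Rightarrow> nat. (\<exists>k\<in>{1..p}. e k \<noteq> 0) \<and>
           (\<forall>q :: nat \<Rightarrow> complex. (\<forall>k\<in>{1..p}. q k \<noteq> 0) \<longrightarrow>
              acoef p s i4 q * acoef p s i3 q powi (m' + n' - 1)
                / (acoef p s i1 q powi m' * acoef p s i2 q powi n')
              = (\<Prod>k\<in>{1..p}. q k ^ e k))"
  proof -
  define \<sigma> where "\<sigma> = {i1, i2, i3}"
  have \<sigma>sub: "\<sigma> \<subseteq> {1..p+3}" and c\<sigma>: "card \<sigma> = 3"
    using T sigma unfolding unimodular_triangulation_def \<sigma>_def by auto
  have idx: "i1 \<in> {1..p+3}" "i2 \<in> {1..p+3}" "i3 \<in> {1..p+3}" using \<sigma>sub \<sigma>_def by auto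
  define t where "t k i = (if i \<in> {1,2,3} then 0 else s {1,2,3} k i)" for k i
  have a: "acoef p s i q = (\<Prod>k\<in>{1..p}. q k ^ t k i)" for i q by (simp add: acoef_def t_def)
  define l where "l i = (if i = i4 then 1 else 0) + (if i = i3 then m'+n'-1 else 0)
      - (if i = i1 then m' else 0) - (if i = i2 then n' else 0)" for i
  have S: "(\<Sum>i\<in>{1..p+3}. c i * of_int (l i)) = c i4 + of_int (m'+n'-1) * c i3 - of_int m' * c i1 - of_int n' * c i2"
    for c :: "nat \<Rightarrow> 'a::comm_ring_1"
    unfolding l_def by (rule sum4) (use idx i4 in auto)
  have lL: "l \<in> latL (p+3) b"
    unfolding latL_def
  proof (intro CollectI conjI allI impI)
    show "l i = 0" if "i \<notin> {1..p+3}" for i using that idx i4 by (auto simp: l_def)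
    have "(\<Sum>i\<in>{1..p+3}. l i * fst (b i)) = (\<Sum>i\<in>{1..p+3}. fst (b i) * of_int (l i))"
      by (simp add: mult.commute)
    also have "\<dots> = 0" unfolding S using mn by (simp add: algebra_simps)
    finally show "(\<Sum>i\<in>{1..p+3}. l i * fst (b i)) = 0" .
    have "(\<Sum>i\<in>{1..p+3}. l i * snd (b i)) = (\<Sum>i\<in>{1..p+3}. snd (b i) * of_int (l i))"
      by (simp add: mult.commute)
    also have "\<dots> = 0" unfolding S using mn by (simp add: algebra_simps)
    finally show "(\<Sum>i\<in>{1..p+3}. l i * snd (b i)) = 0" .
    have "(\<Sum>i\<in>{1..p+3}. l i) = (\<Sum>i\<in>{1..p+3}. (1::int) * of_int (l i))" by simp
    also have "\<dots> = 0" unfolding S by (simp add: algebra_simps)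
    finally show "(\<Sum>i\<in>{1..p+3}. l i) = 0" .
  qed
  have key: "int (t k i4) + (m'+n'-1) * int (t k i3) - m' * int (t k i1) - n' * int (t k i2)
      = int (s \<sigma> k i4)" if k: "k \<in> {1..p}" for k
  proof -
    have e1: "Dcomb (p+3) (H k) l = Dcomb (p+3) (\<lambda>j. if j \<in> {1,2,3} then 0 else of_nat (s {1,2,3} k j)) l"
      using nef sigma1 k lL unfolding nef_data_def by blast
    have e2: "Dcomb (p+3) (H k) l = Dcomb (p+3) (\<lambda>j. if j \<in> \<sigma> then 0 else of_nat (s \<sigma> k j)) l"
      using nef sigma k lL unfolding nef_data_def \<sigma>_def by blast
    have "(\<lambda>j. if j \<in> {1,2,3} then 0 else of_nat (s {1,2,3} k j)) = (\<lambda>j. (of_nat (t k j) :: rat))"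
      by (auto simp: t_def)
    with e1 e2 have "Dcomb (p+3) (\<lambda>j. (of_nat (t k j) :: rat)) l
       = Dcomb (p+3) (\<lambda>j. if j \<in> \<sigma> then 0 else of_nat (s \<sigma> k j)) l" by simp
    hence "(of_nat (t k i4) :: rat) + of_int (m'+n'-1) * of_nat (t k i3) - of_int m' * of_nat (t k i1)
        - of_int n' * of_nat (t k i2) = of_nat (s \<sigma> k i4)"
      unfolding Dcomb_def S using i4 by (simp add: \<sigma>_def)
    hence "(of_int (int (t k i4) + (m'+n'-1) * int (t k i3) - m' * int (t k i1) - n' * int (t k i2)) :: rat)
        = of_int (int (s \<sigma> k i4))" by simp
    thus ?thesis by (simp only: of_int_eq_iff)
  qed
  have X: "card ({1..p+3} - \<sigma>) = p" using card_Diff_subset[OF _ \<sigma>sub] c\<sigma> \<sigma>sub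
    by (simp add: finite_subset)
  have nz: "\<exists>k\<in>{1..p}. s \<sigma> k i4 \<noteq> 0"
  proof (rule col_nonzero[of "{1..p+3} - \<sigma>" p i4 "s \<sigma>"])
    show "finite ({1..p+3} - \<sigma>)" by simp
    show "card ({1..p+3} - \<sigma>) = p" by (rule X)
    show "i4 \<in> {1..p+3} - \<sigma>" using i4 by (simp add: \<sigma>_def)
    show "\<forall>c::nat\<Rightarrow>rat. (\<forall>j\<in>{1..p+3} - \<sigma>. (\<Sum>k\<in>{1..p}. c k * of_nat (s \<sigma> k j)) = 0) \<longrightarrow> (\<forall>k\<in>{1..p}. c k = 0)"
      using nef sigma unfolding nef_data_def \<sigma>_def by blast
  qed
  show ?thesis
  proof (intro exI[of _ "\<lambda>k. s \<sigma> k i4"] conjI allI impI)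
    show "\<exists>k\<in>{1..p}. s \<sigma> k i4 \<noteq> 0" by (rule nz)
    fix q :: "nat \<Rightarrow> complex" assume q: "\<forall>k\<in>{1..p}. q k \<noteq> 0"
    have "acoef p s i4 q * acoef p s i3 q powi (m' + n' - 1) / (acoef p s i1 q powi m' * acoef p s i2 q powi n')
       = (\<Prod>k\<in>{1..p}. q k ^ t k i4 * (q k ^ t k i3) powi (m' + n' - 1) / ((q k ^ t k i1) powi m' * (q k ^ t k i2) powi n'))"
      unfolding a by (simp add: prod_powi prod.distrib prod_dividef)
    also have "\<dots> = (\<Prod>k\<in>{1..p}. q k ^ s \<sigma> k i4)"
      by (rule prod.cong[OF refl], rule cx1) (use q key in auto)
    finally show "acoef p s i4 q * acoef p s i3 q powi (m' + n' - 1) / (acoef p s i1 q powi m' * acoef p s i2 q powi n')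
       = (\<Prod>k\<in>{1..p}. q k ^ s \<sigma> k i4)" .
  qed
qed

end
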